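(* Let $\mathcal{H}_1\cong \mathrm{Bl}_p\mathbb{P}^2$ be the first Hirzebruch surface, with Cox ring $S=\mathbb{C}[x_1,x_2,x_3,x_4]$ graded by $\operatorname{Pic}(\mathcal{H}_1)=\mathbb{Z}D_1\oplus\mathbb{Z}D_2$, where $D_1$ is the fiber divisor and $D_2$ is the exceptional divisor. For every integer $d$ with $5\le d\le 10$, there exists a nondegenerate $f\in S_{\beta}$, $\beta=dD_1+3D_2$, whose zero locus $C$ (a smooth curve of genus $g=2d-5$) admits a first order deformation inside the linear system $|\beta|$ on $\mathcal{H}_1$ of rank $g$; that is, there exists $\eta\in S_\beta$ such that the multiplication map $\cdot\eta: R_1(f)_{\beta+K}\to R_1(f)_{2\beta+K}$ has rank $g$, where $K=K_{\mathcal{H}_1}$.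
   Context: $\mathcal{H}_1$ is the smooth complete toric surface whose fan has ray generators $u_1=(-1,1)$, $u_2=(0,1)$, $u_3=(1,0)$, $u_4=(0,-1)$, with torus-invariant prime divisors $D_1,\dots,D_4$ and corresponding Cox ring variables $x_1,\dots,x_4$. In $\operatorname{Pic}$ one has $D_3=D_1$, $D_4=D_1+D_2$; so $\deg x_1=\deg x_3=D_1$, $\deg x_2=D_2$, $\deg x_4=D_1+D_2$. For a class $\alpha$, $S_\alpha$ is the span of monomials of degree $\alpha$, and $S_\alpha\cong H^0(\mathcal{O}(\alpha))$. The canonical class is $K=-D_1-D_2-D_3-D_4=-3D_1-2D_2$. A polynomial $f\in S_\beta$ with $\beta$ ample is nondegenerate if the polynomials $x_i\,\partial f/\partial x_i$ ($i=1,\dots,4$) have no common zero on the toric surface (equivalently, $\{f=0\}$ meets every torus orbit in a smooth subvariety of codimension one). Set $J_0(f)=\langle x_i\,\partial f/\partial x_i\rangle_{i}\subset S$, $J_1(f)=J_0(f):\langle x_1x_2x_3x_4\rangle=\{h\in S: h\,x_1x_2x_3x_4\in J_0(f)\}$, $R_1(f)=S/J_1(f)$ with the induced grading. By Batyrev–Cox, $H^0(C,\omega_C)\cong R_1(f)_{\beta+K}$ and $H^1(C,\mathcal{O}_C)\cong R_1(f)_{2\beta+K}$, and under these identifications the infinitesimal variation of Hodge structure of a first order deformation of $C$ in $|\beta|$ given by $\eta\in S_\beta$ is (up to a nonzero constant) multiplication by $\eta$; its rank is the rank of this map. *)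

theory Defs
  imports Complex_Main "HOL-Library.Poly_Mapping" "HOL-Library.Product_Plus"
begin

text \<open>A monomial x1^a x2^b x3^c x4^d is its exponent vector (a,b,c,d);
  a polynomial is a finitely supported map from exponent vectors to complex
  coefficients (multiplication = convolution, from Poly_Mapping).\<close>

type_synonym expo = "nat \<times> nat \<times> nat \<times> nat"
type_synonym cpoly = "expo \<Rightarrow>\<^sub>0 complex"

text \<open>Pic(H_1) = Z D1 + Z D2 written as int pairs (coefficients of D1, D2).
  deg x1 = deg x3 = D1, deg x2 = D2, deg x4 = D1 + D2.\<close>

definition D1 :: "int \<times> int" where "D1 = (1, 0)"
definition D2 :: "int \<times> int" where "D2 = (0, 1)"

definition scale_deg :: "nat \<Rightarrow> int \<times> int \<Rightarrow> int \<times> int" where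
  "scale_deg n v = (int n * fst v, int n * snd v)"

definition var_deg :: "nat \<Rightarrow> int \<times> int" where
  "var_deg i = (if i = 1 then D1 else if i = 2 then D2 else if i = 3 then D1 else D1 + D2)"

definition expo_deg :: "expo \<Rightarrow> int \<times> int" where
  "expo_deg e = (case e of (a, b, c, d) \<Rightarrow>
     scale_deg a (var_deg 1) + scale_deg b (var_deg 2) + scale_deg c (var_deg 3) + scale_deg d (var_deg 4))"

definition canonical_class :: "int \<times> int" where
  "canonical_class = - (var_deg 1 + var_deg 2 + var_deg 3 + var_deg 4)"

definition S_deg :: "int \<times> int \<Rightarrow> cpoly set" where
  "S_deg \<alpha> = {p. \<forall>e \<in> Poly_Mapping.keys p. expo_deg e = \<alpha>}"

definition exp_at :: "nat \<Rightarrow> expo \<Rightarrow> nat" where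
  "exp_at i e = (case e of (a, b, c, d) \<Rightarrow>
     (if i = 1 then a else if i = 2 then b else if i = 3 then c else d))"

definition var :: "nat \<Rightarrow> cpoly" where
  "var i = Poly_Mapping.single
     (if i = 1 then (1,0,0,0) else if i = 2 then (0,1,0,0) else if i = 3 then (0,0,1,0) else (0,0,0,1)) 1"

definition cscale :: "complex \<Rightarrow> cpoly \<Rightarrow> cpoly" where
  "cscale c p = Poly_Mapping.map (\<lambda>a. c * a) p"

text \<open>The Euler-type derivative x_i * d f / d x_i : monomial x^e is sent to e_i x^e.\<close>
definition xdiff :: "nat \<Rightarrow> cpoly \<Rightarrow> cpoly" where
  "xdiff i f = Abs_poly_mapping (\<lambda>e. of_nat (exp_at i e) * Poly_Mapping.lookup f e)"

definition peval :: "cpoly \<Rightarrow> complex \<times> complex \<times> complex \<times> complex \<Rightarrow> complex" where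
  "peval p z = (case z of (z1, z2, z3, z4) \<Rightarrow>
     (\<Sum>e\<in>Poly_Mapping.keys p. Poly_Mapping.lookup p e *
        (case e of (a, b, c, d) \<Rightarrow> z1 ^ a * z2 ^ b * z3 ^ c * z4 ^ d)))"

text \<open>Exceptional set Z = V(x3x4, x4x1, x1x2, x2x3) = {x1=x3=0} \<union> {x2=x4=0};
  points of H_1 are G-orbits of C^4 - Z. Since the x_i df/dx_i are quasi-homogeneous,
  a common zero on H_1 is a common zero in C^4 - Z.\<close>
definition exceptional_set :: "(complex \<times> complex \<times> complex \<times> complex) set" where
  "exceptional_set = {(z1, z2, z3, z4). (z1 = 0 \<and> z3 = 0) \<or> (z2 = 0 \<and> z4 = 0)}"

definition nondegenerate :: "cpoly \<Rightarrow> bool" where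
  "nondegenerate f \<longleftrightarrow>
     (\<forall>z. (\<forall>i\<in>{1,2,3,4}. peval (xdiff i f) z = 0) \<longrightarrow> z \<in> exceptional_set)"

definition J0 :: "cpoly \<Rightarrow> cpoly set" where
  "J0 f = {p. \<exists>a :: nat \<Rightarrow> cpoly. p = (\<Sum>i\<in>{1,2,3,4}. a i * xdiff i f)}"

definition J1 :: "cpoly \<Rightarrow> cpoly set" where
  "J1 f = {h. h * (var 1 * var 2 * var 3 * var 4) \<in> J0 f}"

text \<open>Rank of the map R_1(f)_{beta+K} -> R_1(f)_{2 beta+K} induced by multiplication
  with eta: the dimension of its image, i.e. the largest n such that there are
  h_1..h_n in S_{beta+K} whose products with eta are linearly independent modulo J_1(f)
  (as elements of R_1(f)_{2 beta+K} = S_{2 beta+K} / (J_1(f) \<inter> S_{2 beta+K})).\<close>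
definition lin_indep_mod :: "cpoly set \<Rightarrow> (nat \<Rightarrow> cpoly) \<Rightarrow> nat \<Rightarrow> bool" where
  "lin_indep_mod W v n \<longleftrightarrow>
     (\<forall>c :: nat \<Rightarrow> complex. (\<Sum>i<n. cscale (c i) (v i)) \<in> W \<longrightarrow> (\<forall>i<n. c i = 0))"

definition IVHS_rank :: "int \<times> int \<Rightarrow> cpoly \<Rightarrow> cpoly \<Rightarrow> nat" where
  "IVHS_rank \<beta> f \<eta> = (GREATEST n. \<exists>h :: nat \<Rightarrow> cpoly.
      (\<forall>i<n. h i \<in> S_deg (\<beta> + canonical_class)) \<and>
      lin_indep_mod (J1 f) (\<lambda>i. \<eta> * h i) n)"

end

theory Submission
  imports Defs
begin


definition gp :: "(expo \<times> int) list \<Rightarrow> cpoly" where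
  "gp L = sum_list (map (\<lambda>(k,c). Poly_Mapping.single k (of_int c)) L)"
definition Lc :: "(expo \<times> int) list \<Rightarrow> expo \<Rightarrow> int" where
  "Lc Ls s = sum_list (map (\<lambda>(k,c). if k = s then c else 0) Ls)"
definition Lapp :: "(expo \<times> int) list \<Rightarrow> cpoly \<Rightarrow> complex" where
  "Lapp Ls p = sum_list (map (\<lambda>(k,c). of_int c * Poly_Mapping.lookup p k) Ls)"

lemma gp_Nil[simp]: "gp [] = 0" by (simp add: gp_def)
lemma gp_Cons[simp]: "gp ((k,c)#L) = Poly_Mapping.single k (of_int c) + gp L" by (simp add: gp_def)
lemma Lc_Nil[simp]: "Lc [] s = 0" by (simp add: Lc_def)
lemma Lc_Cons[simp]: "Lc ((k,c)#L) s = (if k = s then c else 0) + Lc L s" by (simp add: Lc_def)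

lemma lookup_gp: "Poly_Mapping.lookup (gp F) e = of_int (Lc F e)"
  by (induction F) (auto simp: lookup_add lookup_single)

lemma Lapp_add: "Lapp Ls (p + q) = Lapp Ls p + Lapp Ls q"
  unfolding Lapp_def
  by (induction Ls) (auto simp: lookup_add algebra_simps)
lemma Lapp_zero[simp]: "Lapp Ls 0 = 0"
  unfolding Lapp_def by (induction Ls) auto
lemma Lapp_sum: "Lapp Ls (sum f A) = (\<Sum>x\<in>A. Lapp Ls (f x))"
  by (induction A rule: infinite_finite_induct) (auto simp: Lapp_add)
lemma Lapp_single: "Lapp Ls (Poly_Mapping.single k a) = a * of_int (Lc Ls k)"
  unfolding Lapp_def
  by (induction Ls) (auto simp: lookup_single algebra_simps when_def)
lemma Lapp_gp: "Lapp Ls (gp G) = of_int (sum_list (map (\<lambda>(k,c). c * Lc Ls k) G))"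
  by (induction G) (auto simp: Lapp_add Lapp_single)

lemma cscale_conv: "cscale c p = Poly_Mapping.single 0 c * p"
  unfolding cscale_def by (rule mult_map_scale_conv_mult)

lemma Lapp_cscale: "Lapp Ls (cscale a p) = a * Lapp Ls p"
  unfolding Lapp_def cscale_def
  by (induction Ls) (auto simp: algebra_simps Poly_Mapping.map.rep_eq when_def)

lemma single_mult_gp: "Poly_Mapping.single e a * gp G =
   sum_list (map (\<lambda>(k,c). Poly_Mapping.single (e + k) (a * of_int c)) G)"
  by (induction G) (auto simp: distrib_left mult_single)

definition le4 :: "expo \<Rightarrow> expo \<Rightarrow> bool" where
  "le4 x y = (case x of (a,b,c,d) \<Rightarrow> case y of (a',b',c',d') \<Rightarrow> a \<le> a' \<and> b \<le> b' \<and> c \<le> c' \<and> d \<le> d')"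
definition sub4 :: "expo \<Rightarrow> expo \<Rightarrow> expo" where
  "sub4 x y = (case x of (a,b,c,d) \<Rightarrow> case y of (a',b',c',d') \<Rightarrow> (a - a', b - b', c - c', d - d'))"

lemma le4_sub4: "e + k = s \<Longrightarrow> le4 k s \<and> sub4 s k = e"
  by (cases e; cases k; cases s) (auto simp: le4_def sub4_def)

definition Gsum :: "(expo \<times> int) list \<Rightarrow> (expo \<times> int) list \<Rightarrow> expo \<Rightarrow> int" where
  "Gsum Ls G e = sum_list (map (\<lambda>(k,c). c * Lc Ls (e + k)) G)"

definition ann_chk :: "(expo \<times> int) list \<Rightarrow> (expo \<times> int) list \<Rightarrow> bool" where
  "ann_chk Ls G = list_all (\<lambda>(s,_). list_all (\<lambda>(k,_). \<not> le4 k s \<or> Gsum Ls G (sub4 s k) = 0) G) Ls"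

lemma Lc_nonzero: "Lc Ls s \<noteq> 0 \<Longrightarrow> \<exists>c. (s,c) \<in> set Ls"
  by (induction Ls) (auto split: if_splits)

lemma Gsum_nonzero: "Gsum Ls G e \<noteq> 0 \<Longrightarrow> \<exists>p \<in> set G. Lc Ls (e + fst p) \<noteq> 0"
  unfolding Gsum_def
proof (induction G)
  case (Cons x G)
  obtain k c where x: "x = (k,c)" by fastforce
  show ?case
  proof (cases "c * Lc Ls (e + k) = 0")
    case True thus ?thesis using Cons by (auto simp: x Gsum_def)
  next
    case False thus ?thesis by (auto simp: x)
  qed
qed simp

lemma ann_chk_all: assumes "ann_chk Ls G" shows "Gsum Ls G e = 0"
proof (rule ccontr)
  assume "Gsum Ls G e \<noteq> 0"
  then obtain p where "p \<in> set G" "Lc Ls (e + fst p) \<noteq> 0" using Gsum_nonzero by blast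
  moreover obtain k c where "p = (k,c)" by fastforce
  ultimately have kc: "(k,c) \<in> set G" "Lc Ls (e + k) \<noteq> 0" by simp_all
  then obtain c' where "(e + k, c') \<in> set Ls" using Lc_nonzero by blast
  moreover have "le4 k (e + k)" "sub4 (e + k) k = e" using le4_sub4[of e k "e+k"] by auto
  ultimately have "Gsum Ls G e = 0" using assms kc(1) unfolding ann_chk_def list_all_iff by fastforce
  with \<open>Gsum Ls G e \<noteq> 0\<close> show False by simp
qed

lemma poly_monomials: "(p::cpoly) = (\<Sum>e\<in>Poly_Mapping.keys p. Poly_Mapping.single e (Poly_Mapping.lookup p e))"
proof (rule poly_mapping_eqI)
  fix k
  show "Poly_Mapping.lookup p k = Poly_Mapping.lookup (\<Sum>e\<in>Poly_Mapping.keys p. Poly_Mapping.single e (Poly_Mapping.lookup p e)) k"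
    by (auto simp: lookup_sum lookup_single when_def in_keys_iff)
qed

lemma Lapp_single_mult_gp: "Lapp Ls (Poly_Mapping.single e a * gp G) = a * of_int (Gsum Ls G e)"
  unfolding single_mult_gp Gsum_def
  by (induction G) (auto simp: Lapp_add Lapp_single algebra_simps)

lemma ann_chk_mult: assumes "ann_chk Ls G" shows "Lapp Ls (a * gp G) = 0"
proof -
  have "Lapp Ls (a * gp G) = Lapp Ls (\<Sum>e\<in>Poly_Mapping.keys a. Poly_Mapping.single e (Poly_Mapping.lookup a e) * gp G)"
    by (subst poly_monomials[of a]) (simp add: sum_distrib_right)
  also have "\<dots> = 0"
    by (simp add: Lapp_sum Lapp_single_mult_gp ann_chk_all[OF assms])
  finally show ?thesis .
qed

lemma lookup_xdiff: "Poly_Mapping.lookup (xdiff i p) = (\<lambda>e. of_nat (exp_at i e) * Poly_Mapping.lookup p e)"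
  unfolding xdiff_def
  by (rule lookup_Abs_poly_mapping, rule finite_subset[OF _ finite_lookup[of p]]) auto

definition dgen :: "nat \<Rightarrow> (expo \<times> int) list \<Rightarrow> (expo \<times> int) list" where
  "dgen i F = map (\<lambda>(k,c). (k, int (exp_at i k) * c)) F"

lemma Lc_dgen: "Lc (dgen i F) e = int (exp_at i e) * Lc F e"
  unfolding dgen_def by (induction F) (auto simp: algebra_simps)

lemma xdiff_gp: "xdiff i (gp F) = gp (dgen i F)"
  by (rule poly_mapping_eqI) (simp add: lookup_xdiff lookup_gp Lc_dgen)

definition monom4 :: "expo \<Rightarrow> complex \<times> complex \<times> complex \<times> complex \<Rightarrow> complex" where
  "monom4 e z = (case z of (z1, z2, z3, z4) \<Rightarrow> (case e of (a, b, c, d) \<Rightarrow> z1 ^ a * z2 ^ b * z3 ^ c * z4 ^ d))"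

lemma peval_alt: "peval p z = (\<Sum>e\<in>Poly_Mapping.keys p. Poly_Mapping.lookup p e * monom4 e z)"
  unfolding peval_def monom4_def by (cases z) auto

lemma peval_superset: assumes "finite A" "Poly_Mapping.keys p \<subseteq> A"
  shows "peval p z = (\<Sum>e\<in>A. Poly_Mapping.lookup p e * monom4 e z)"
  unfolding peval_alt
  by (rule sum.mono_neutral_left) (use assms in \<open>auto simp: in_keys_iff\<close>)

lemma peval_add: "peval (p + q) z = peval p z + peval q z"
proof -
  let ?A = "Poly_Mapping.keys p \<union> Poly_Mapping.keys q"
  have "peval (p + q) z = (\<Sum>e\<in>?A. Poly_Mapping.lookup (p+q) e * monom4 e z)"
    by (rule peval_superset) (use keys_add[of p q] in auto)
  also have "\<dots> = (\<Sum>e\<in>?A. Poly_Mapping.lookup p e * monom4 e z) + (\<Sum>e\<in>?A. Poly_Mapping.lookup q e * monom4 e z)"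
    by (simp add: lookup_add distrib_right sum.distrib)
  also have "\<dots> = peval p z + peval q z"
    by (simp add: peval_superset[symmetric])
  finally show ?thesis .
qed

lemma peval_single: "peval (Poly_Mapping.single k a) z = a * monom4 k z"
  by (subst peval_superset[of "{k}"]) auto

lemma peval_gp: "peval (gp F) z = sum_list (map (\<lambda>(k,c). of_int c * monom4 k z) F)"
proof (induction F)
  case Nil show ?case by (simp add: peval_alt)
next
  case (Cons x F) thus ?case by (cases x) (simp add: peval_add peval_single)
qed

definition fF :: "nat \<Rightarrow> (expo \<times> int) list" where
  "fF d = [((d,3,0,0),1), ((0,3,d,0),1), ((d-3,0,0,3),1), ((0,0,d-3,3),1)]"

lemma alg_core:
  fixes a b c e :: complex and n :: nat
  assumes n: "n \<ge> 1"
    and E1: "(of_nat n + 3) * (a ^ (n + 3) * b ^ 3) + of_nat n * (a ^ n * e ^ 3) = 0"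
    and E2': "3 * (a ^ (n + 3) * b ^ 3) + 3 * (b ^ 3 * c ^ (n + 3)) = 0"
    and E3: "(of_nat n + 3) * (b ^ 3 * c ^ (n + 3)) + of_nat n * (c ^ n * e ^ 3) = 0"
    and E4': "3 * (a ^ n * e ^ 3) + 3 * (c ^ n * e ^ 3) = 0"
  shows "(a = 0 \<and> c = 0) \<or> (b = 0 \<and> e = 0)"
proof -
  have "3 * (b^3 * a^(n+3) + b^3 * c^(n+3)) = 0" using E2' by (simp add: algebra_simps)
  hence E2: "b^3 * a^(n+3) + b^3 * c^(n+3) = 0" by (metis mult_eq_0_iff zero_neq_numeral)
  have "3 * (e^3 * a^n + e^3 * c^n) = 0" using E4' by (simp add: algebra_simps)
  hence E4: "e^3 * a^n + e^3 * c^n = 0" by (metis mult_eq_0_iff zero_neq_numeral)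
  have "(of_nat (n+3)::complex) \<noteq> 0" by (simp only: of_nat_eq_0_iff)
  hence nz: "(of_nat n + 3::complex) \<noteq> 0" by simp
  show ?thesis
proof (cases "b = 0")
  case True
  show ?thesis
  proof (cases "e = 0")
    case False
    from E1 True False n have "a = 0" by simp
    moreover from E3 True False n have "c = 0" by simp
    ultimately show ?thesis by simp
  qed (use True in simp)
next
  case b: False
  from E2 b have A: "a^(n+3) = -(c^(n+3))" by (simp add: add_eq_0_iff2 flip: distrib_left)
  show ?thesis
  proof (cases "e = 0")
    case True
    from E1 True b nz have "a = 0" by simp
    moreover from E3 True b nz have "c = 0" by simp
    ultimately show ?thesis by simp
  next
    case e: False
    from E4 e have B: "a^n = -(c^n)" by (simp add: add_eq_0_iff2 flip: distrib_left)
    show ?thesis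
    proof (cases "c = 0")
      case True
      with B n have "a = 0" by (simp add: power_0_left)
      with True show ?thesis by simp
    next
      case c: False
      have "a^n * a^3 = -(c^n) * c^3" using A by (simp add: power_add)
      hence "-(c^n) * a^3 = -(c^n) * c^3" using B by simp
      hence a3: "a^3 = c^3" using c by simp
      have "(a^n)^3 = (c^n)^3" by (simp add: a3 flip: power_mult power_mult_distrib[symmetric]) (metis a3 mult.commute power_mult)
      moreover have "(a^n)^3 = -((c^n)^3)" using B by simp
      ultimately have "(c^n)^3 = 0" by simp
      with c show ?thesis by simp
    qed
  qed
qed
qed

lemma pev_f: "peval (xdiff i (gp (fF d))) z = sum_list (map (\<lambda>(k,c). of_int (int (exp_at i k) * c) * monom4 k z) (fF d))"
  unfolding xdiff_gp peval_gp dgen_def by (simp add: comp_def case_prod_unfold)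

lemma nondeg: assumes "4 \<le> d" shows "nondegenerate (gp (fF d))"
  unfolding nondegenerate_def
proof (intro allI impI)
  fix z :: "complex \<times> complex \<times> complex \<times> complex"
  assume H: "\<forall>i\<in>{1,2,3,4}. peval (xdiff i (gp (fF d))) z = 0"
  obtain a b c e where z: "z = (a,b,c,e)" by (cases z) auto
  define n where "n = d - 3"
  have d: "d = n + 3" "n \<ge> 1" using assms by (auto simp: n_def)
  have E1: "(of_nat n + 3) * (a ^ (n + 3) * b ^ 3) + of_nat n * (a ^ n * e ^ 3) = 0"
    using H[rule_format, of 1] unfolding pev_f by (simp add: fF_def exp_at_def monom4_def z d mult.assoc)
  have E2: "3 * (a ^ (n + 3) * b ^ 3) + 3 * (b ^ 3 * c ^ (n + 3)) = 0"
    using H[rule_format, of 2] unfolding pev_f by (simp add: fF_def exp_at_def monom4_def z d mult.assoc)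
  have E3: "(of_nat n + 3) * (b ^ 3 * c ^ (n + 3)) + of_nat n * (c ^ n * e ^ 3) = 0"
    using H[rule_format, of 3] unfolding pev_f by (simp add: fF_def exp_at_def monom4_def z d mult.assoc)
  have E4: "3 * (a ^ n * e ^ 3) + 3 * (c ^ n * e ^ 3) = 0"
    using H[rule_format, of 4] unfolding pev_f by (simp add: fF_def exp_at_def monom4_def z d mult.assoc)
  show "z \<in> exceptional_set"
    using alg_core[OF d(2) E1 E2 E3 E4] by (auto simp: exceptional_set_def z)
qed

lemma expo_deg_eq: "expo_deg (a,b,c,e) = (int a + int c + int e, int b + int e)"
  by (simp add: expo_deg_def scale_deg_def var_deg_def D1_def D2_def)

lemma beta_eq: "scale_deg d D1 + scale_deg 3 D2 = (int d, 3)"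
  by (simp add: scale_deg_def D1_def D2_def)

lemma canon_eq: "canonical_class = (-3, -2)"
  by (simp add: canonical_class_def var_deg_def D1_def D2_def)

lemma keys_gp: "e \<in> Poly_Mapping.keys (gp F) \<Longrightarrow> \<exists>c. (e,c) \<in> set F"
  using Lc_nonzero[of F e] by (auto simp: in_keys_iff lookup_gp)

lemma gp_S_deg: "(\<forall>p\<in>set F. expo_deg (fst p) = \<alpha>) \<Longrightarrow> gp F \<in> S_deg \<alpha>"
  unfolding S_deg_def using keys_gp by fastforce

definition mons :: "nat \<Rightarrow> nat \<Rightarrow> expo list" where
  "mons A B = concat (map (\<lambda>e. map (\<lambda>a. (a, B - e, A - e - a, e)) [0..<A - e + 1]) [0..<min A B + 1])"

lemma mons_iff: "(a,b,c,e) \<in> set (mons A B) \<longleftrightarrow> a + c + e = A \<and> b + e = B"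
proof
  assume "(a,b,c,e) \<in> set (mons A B)"
  thus "a + c + e = A \<and> b + e = B" unfolding mons_def by auto
next
  assume h: "a + c + e = A \<and> b + e = B"
  have "(a,b,c,e) \<in> set (map (\<lambda>a. (a, B - e, A - e - a, e)) [0..<A - e + 1])"
    using h by (auto simp: image_iff)
  moreover have "e \<in> set [0..<min A B + 1]" using h by auto
  ultimately show "(a,b,c,e) \<in> set (mons A B)" unfolding mons_def by auto
qed

lemma deg_bK: assumes "3 \<le> d" "expo_deg x = (int d, 3) + canonical_class"
  shows "x \<in> set (mons (d-3) 1)"
proof -
  obtain a b c e where x: "x = (a,b,c,e)" by (cases x) auto
  show ?thesis using assms by (auto simp: x mons_iff expo_deg_eq canon_eq)
qed

lemma var_prod: "var 1 * var 2 * var 3 * var 4 = Poly_Mapping.single (1,1,1,1) 1"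
  by (simp add: var_def mult_single)

lemma J0_Lapp: assumes "\<forall>i\<in>{1,2,3,4}. ann_chk Ls (dgen i F)" "p \<in> J0 (gp F)"
  shows "Lapp Ls p = 0"
proof -
  obtain a where "p = (\<Sum>i\<in>{1,2,3,4}. a i * xdiff i (gp F))" using assms(2) by (auto simp: J0_def)
  thus ?thesis using assms(1) by (simp add: Lapp_sum xdiff_gp ann_chk_mult Lapp_add)
qed

lemma cscale_shift: "cscale c (gp E * Poly_Mapping.single h 1) * Poly_Mapping.single u 1
   = Poly_Mapping.single (h + u) c * gp E"
  by (simp add: cscale_conv mult_single ac_simps)

lemma Lapp_img: "Lapp Ls ((\<Sum>i<n. cscale (c i) (gp E * Poly_Mapping.single (Hl!i) 1)) * (var 1 * var 2 * var 3 * var 4))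
   = (\<Sum>i<n. c i * of_int (Gsum Ls E (Hl!i + (1,1,1,1))))"
  unfolding var_prod by (simp add: sum_distrib_right cscale_shift Lapp_sum Lapp_single_mult_gp)

lemma lower:
  assumes ann: "\<forall>L\<in>set Lsl. \<forall>i\<in>{1,2,3,4}. ann_chk L (dgen i F)"
    and mat: "\<forall>k<length Hl. \<forall>i<length Hl. (Gsum (Lsl!k) E (Hl!i + (1,1,1,1)) = 0) \<longleftrightarrow> i \<noteq> k"
    and len: "length Lsl = length Hl"
  shows "lin_indep_mod (J1 (gp F)) (\<lambda>i. gp E * Poly_Mapping.single (Hl!i) 1) (length Hl)"
  unfolding lin_indep_mod_def
proof (intro allI impI)
  fix c :: "nat \<Rightarrow> complex" and k
  assume inJ: "(\<Sum>i<length Hl. cscale (c i) (gp E * Poly_Mapping.single (Hl ! i) 1)) \<in> J1 (gp F)"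
    and k: "k < length Hl"
  let ?n = "length Hl"
  have L: "Lsl!k \<in> set Lsl" using k len by simp
  have "0 = Lapp (Lsl!k) ((\<Sum>i<?n. cscale (c i) (gp E * Poly_Mapping.single (Hl!i) 1)) * (var 1 * var 2 * var 3 * var 4))"
    using J0_Lapp[of "Lsl!k" F] ann L inJ by (auto simp: J1_def)
  also have "\<dots> = (\<Sum>i<?n. c i * of_int (Gsum (Lsl!k) E (Hl!i + (1,1,1,1))))"
    by (rule Lapp_img)
  also have "\<dots> = c k * of_int (Gsum (Lsl!k) E (Hl!k + (1,1,1,1)))"
  proof -
    let ?f = "\<lambda>i. c i * of_int (Gsum (Lsl!k) E (Hl!i + (1,1,1,1)))"
    have "sum ?f {..<?n} = ?f k + sum ?f ({..<?n} - {k})" by (rule sum.remove) (use k in auto)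
    moreover have "sum ?f ({..<?n} - {k}) = 0" by (rule sum.neutral) (use mat k in auto)
    ultimately show ?thesis by simp
  qed
  finally show "c k = 0" using mat k by auto
qed

interpretation cs: vector_space cscale
  by unfold_locales
    (simp_all add: cscale_conv distrib_left distrib_right single_add mult.assoc[symmetric] mult_single)

lemma cscale_single1: "cscale a (Poly_Mapping.single e 1) = Poly_Mapping.single e a"
  by (simp add: cscale_conv mult_single)

lemma in_span_monos: assumes "finite M" "Poly_Mapping.keys p \<subseteq> M"
  shows "p \<in> cs.span ((\<lambda>m. Poly_Mapping.single m 1) ` M)"
proof -
  have "p = (\<Sum>e\<in>Poly_Mapping.keys p. cscale (Poly_Mapping.lookup p e) (Poly_Mapping.single e 1))"
    by (subst poly_monomials) (simp add: cscale_single1)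
  also have "\<dots> \<in> cs.span ((\<lambda>m. Poly_Mapping.single m 1) ` M)"
    by (rule cs.span_sum, rule cs.span_scale, rule cs.span_base) (use assms in auto)
  finally show ?thesis .
qed

lemma upper_dep:
  assumes M: "finite M" and keys: "\<forall>i<n. Poly_Mapping.keys (h i) \<subseteq> M" and n: "card M < n"
  shows "\<exists>c. (\<Sum>i<n. cscale (c i) (h i)) = 0 \<and> (\<exists>i<n. c i \<noteq> 0)"
proof (cases "inj_on h {..<n}")
  case False
  then obtain i j where ij: "i < n" "j < n" "i \<noteq> j" "h i = h j" unfolding inj_on_def by auto
  define c where "c = (\<lambda>k. if k = i then (1::complex) else if k = j then -1 else 0)"
  have "(\<Sum>k<n. cscale (c k) (h k)) = (\<Sum>k\<in>{i,j}. cscale (c k) (h k))"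
    by (rule sum.mono_neutral_right) (use ij in \<open>auto simp: c_def cs.scale_zero_left\<close>)
  also have "\<dots> = 0" using ij by (simp add: c_def)
  finally show ?thesis using ij by (auto simp: c_def intro!: exI[of _ c])
next
  case True
  let ?S = "h ` {..<n}"
  let ?T = "(\<lambda>m. Poly_Mapping.single m (1::complex)) ` M"
  have cS: "card ?S = n" using True by (simp add: card_image)
  have "card ?T \<le> card M" using M by (rule card_image_le)
  have sub: "?S \<subseteq> cs.span ?T" using keys in_span_monos[OF M] by auto
  have "cs.dependent ?S"
  proof (rule ccontr)
    assume "cs.independent ?S"
    hence "card ?S \<le> card ?T" using cs.independent_span_bound[OF _ _ sub] M by auto
    with cS \<open>card ?T \<le> card M\<close> n show False by simp
  qed
  then obtain u where u: "\<exists>v\<in>?S. u v \<noteq> 0" "(\<Sum>v\<in>?S. cscale (u v) v) = 0"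
    using cs.dependent_finite[of ?S] by auto
  have "(\<Sum>i<n. cscale (u (h i)) (h i)) = (\<Sum>v\<in>?S. cscale (u v) v)"
    using sum.reindex[OF True, of "\<lambda>v. cscale (u v) v"] by simp
  with u show ?thesis by (auto intro!: exI[of _ "\<lambda>i. u (h i)"])
qed



definition eta :: "nat \<Rightarrow> (expo \<times> int) list" where
  "eta d = [((0,3,d,0),1), ((1,2,d-2,1),1)]"

lemma cscale_comm: "cscale c (q * p) = q * cscale c p"
  by (simp add: cscale_conv mult.left_commute)

lemma zero_J1: "0 \<in> J1 f"
  unfolding J1_def J0_def by (auto intro!: exI[of _ "\<lambda>_. 0"])

lemma main_d:
  assumes d: "4 \<le> d"
    and ann: "\<forall>L\<in>set Lsl. \<forall>i\<in>{1,2,3,4}. ann_chk L (dgen i (fF d))"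
    and mat: "\<forall>k<length Hl. \<forall>i<length Hl. (Gsum (Lsl!k) (eta d) (Hl!i + (1,1,1,1)) = 0) \<longleftrightarrow> i \<noteq> k"
    and len: "length Lsl = length Hl" and Hl: "Hl = mons (d-3) 1"
    and lenH: "length Hl = 2*d-5" and dist: "distinct Hl"
  shows "\<exists>f \<in> S_deg (scale_deg d D1 + scale_deg 3 D2). nondegenerate f \<and>
           (\<exists>\<eta> \<in> S_deg (scale_deg d D1 + scale_deg 3 D2).
              IVHS_rank (scale_deg d D1 + scale_deg 3 D2) f \<eta> = 2 * d - 5)"
proof -
  have N: "nondegenerate (gp (fF d))" using nondeg d by simp
  have F: "gp (fF d) \<in> S_deg (scale_deg d D1 + scale_deg 3 D2)"
    unfolding beta_eq by (rule gp_S_deg) (use d in \<open>auto simp: fF_def expo_deg_eq\<close>)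
  have E: "gp (eta d) \<in> S_deg (scale_deg d D1 + scale_deg 3 D2)"
    unfolding beta_eq by (rule gp_S_deg) (use d in \<open>auto simp: eta_def expo_deg_eq\<close>)
  have R: "IVHS_rank (scale_deg d D1 + scale_deg 3 D2) (gp (fF d)) (gp (eta d)) = 2 * d - 5"
    unfolding IVHS_rank_def beta_eq
  proof (rule Greatest_equality)
    let ?h = "\<lambda>i. Poly_Mapping.single (Hl!i) (1::complex)"
    have A1: "\<forall>i<2*d-5. ?h i \<in> S_deg ((int d, 3) + canonical_class)"
    proof (intro allI impI)
      fix i assume "i < 2*d-5"
      hence "Hl!i \<in> set (mons (d-3) 1)" using lenH Hl by auto
      moreover obtain a b c e where "Hl!i = (a,b,c,e)" by (cases "Hl!i") auto
      ultimately show "?h i \<in> S_deg ((int d, 3) + canonical_class)"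
        using d by (auto simp: S_deg_def mons_iff expo_deg_eq canon_eq)
    qed
    have A2: "lin_indep_mod (J1 (gp (fF d))) (\<lambda>i. gp (eta d) * ?h i) (2*d-5)"
      using lower[OF ann mat len] lenH by simp
    show "\<exists>h. (\<forall>i<2*d-5. h i \<in> S_deg ((int d, 3) + canonical_class)) \<and>
        lin_indep_mod (J1 (gp (fF d))) (\<lambda>i. gp (eta d) * h i) (2*d-5)"
      by (rule exI[of _ ?h], rule conjI[OF A1 A2])
  next
    fix n assume "\<exists>h. (\<forall>i<n. h i \<in> S_deg ((int d, 3) + canonical_class)) \<and>
        lin_indep_mod (J1 (gp (fF d))) (\<lambda>i. gp (eta d) * h i) n"
    then obtain h where hS: "\<forall>i<n. h i \<in> S_deg ((int d, 3) + canonical_class)"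
      and li: "lin_indep_mod (J1 (gp (fF d))) (\<lambda>i. gp (eta d) * h i) n" by blast
    show "n \<le> 2*d-5"
    proof (rule ccontr)
      assume "\<not> n \<le> 2*d-5"
      hence n: "card (set Hl) < n" using dist lenH by (simp add: distinct_card)
      have keys: "\<forall>i<n. Poly_Mapping.keys (h i) \<subseteq> set Hl"
      proof (intro allI impI subsetI)
        fix i x assume "i < n" "x \<in> Poly_Mapping.keys (h i)"
        hence "expo_deg x = (int d, 3) + canonical_class" using hS unfolding S_deg_def by blast
        thus "x \<in> set Hl" using deg_bK[of d x] d Hl by simp
      qed
      obtain c where c: "(\<Sum>i<n. cscale (c i) (h i)) = 0" "\<exists>i<n. c i \<noteq> 0"
        using upper_dep[OF _ keys n] by auto
      have "(\<Sum>i<n. cscale (c i) (gp (eta d) * h i)) = gp (eta d) * (\<Sum>i<n. cscale (c i) (h i))"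
        by (simp add: sum_distrib_left cscale_comm)
      hence "(\<Sum>i<n. cscale (c i) (gp (eta d) * h i)) \<in> J1 (gp (fF d))" using c(1) zero_J1 by simp
      with li c(2) show False unfolding lin_indep_mod_def by blast
    qed
  qed
  show ?thesis using N F E R by blast
qed

definition check_all :: "nat \<Rightarrow> (expo \<times> int) list list \<Rightarrow> bool" where
  "check_all d Lsl = (let Hl = mons (d-3) 1 in
     list_all (\<lambda>L. list_all (\<lambda>i. ann_chk L (dgen i (fF d))) [1,2,3,4]) Lsl \<and>
     list_all (\<lambda>k. list_all (\<lambda>i. (Gsum (Lsl!k) (eta d) (Hl!i + (1,1,1,1)) = 0) = (i \<noteq> k)) [0..<length Hl]) [0..<length Hl] \<and>
     length Lsl = length Hl \<and> length Hl = 2*d-5 \<and> distinct Hl)"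

lemma check_main:
  assumes d: "4 \<le> d" and chk: "check_all d Lsl"
  shows "\<exists>f \<in> S_deg (scale_deg d D1 + scale_deg 3 D2). nondegenerate f \<and>
           (\<exists>\<eta> \<in> S_deg (scale_deg d D1 + scale_deg 3 D2).
              IVHS_rank (scale_deg d D1 + scale_deg 3 D2) f \<eta> = 2 * d - 5)"
proof (rule main_d[OF d _ _ _ refl])
  let ?Hl = "mons (d-3) 1"
  show "\<forall>L\<in>set Lsl. \<forall>i\<in>{1,2,3,4}. ann_chk L (dgen i (fF d))"
    using chk by (simp add: check_all_def Let_def list_all_iff)
  show "\<forall>k<length ?Hl. \<forall>i<length ?Hl. (Gsum (Lsl!k) (eta d) (?Hl!i + (1,1,1,1)) = 0) \<longleftrightarrow> i \<noteq> k"
    using chk by (simp add: check_all_def Let_def list_all_iff)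
  show "length Lsl = length ?Hl" "length ?Hl = 2*d-5" "distinct ?Hl"
    using chk by (simp_all add: check_all_def Let_def)
qed

definition Lsl5 :: "(expo \<times> int) list list" where
  "Lsl5 = [[((1,5,8,1),2), ((3,5,6,1),-2), ((6,5,3,1),-2), ((8,5,1,1),2), ((4,4,4,2),2), ((1,2,5,4),-5), ((3,2,3,4),5), ((5,2,1,4),-5)],
    [((0,5,9,1),-2), ((2,5,7,1),2), ((4,5,5,1),-2), ((5,5,4,1),2), ((7,5,2,1),-2), ((9,5,0,1),2), ((0,2,6,4),5), ((2,2,4,4),-5), ((4,2,2,4),5), ((6,2,0,4),-5)],
    [((4,4,4,2),1)],
    [((0,5,9,1),-2), ((2,5,7,1),2), ((4,5,5,1),-2), ((5,5,4,1),2), ((7,5,2,1),-2), ((9,5,0,1),2), ((1,4,7,2),2), ((3,4,5,2),-2), ((6,4,2,2),-2), ((8,4,0,2),2), ((0,2,6,4),5), ((2,2,4,4),-5), ((4,2,2,4),5), ((6,2,0,4),-5), ((1,1,4,5),-5), ((3,1,2,5),5), ((5,1,0,5),-5)],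
    [((1,5,8,1),-2), ((3,5,6,1),2), ((6,5,3,1),2), ((8,5,1,1),-2), ((0,4,8,2),-2), ((2,4,6,2),2), ((4,4,4,2),-2), ((5,4,3,2),2), ((7,4,1,2),-2), ((1,2,5,4),5), ((3,2,3,4),-5), ((5,2,1,4),5), ((0,1,5,5),5), ((2,1,3,5),-5), ((4,1,1,5),5)]]"
lemma chk5: "check_all 5 Lsl5"
  by code_simp

definition Lsl6 :: "(expo \<times> int) list list" where
  "Lsl6 = [[((1,5,10,1),1), ((4,5,7,1),-1), ((7,5,4,1),-1), ((10,5,1,1),1), ((5,4,5,2),1), ((1,2,7,4),-2), ((4,2,4,4),2), ((7,2,1,4),-2)],
    [((2,5,9,1),1), ((5,5,6,1),-1), ((8,5,3,1),-1), ((11,5,0,1),1), ((2,2,6,4),-2), ((5,2,3,4),2), ((8,2,0,4),-2)],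
    [((0,5,11,1),-1), ((3,5,8,1),1), ((6,5,5,1),1), ((9,5,2,1),-1), ((0,2,8,4),2), ((3,2,5,4),-2), ((6,2,2,4),2)],
    [((5,4,5,2),1)],
    [((0,5,11,1),-1), ((3,5,8,1),1), ((6,5,5,1),1), ((9,5,2,1),-1), ((1,4,9,2),1), ((4,4,6,2),-1), ((7,4,3,2),-1), ((10,4,0,2),1), ((0,2,8,4),2), ((3,2,5,4),-2), ((6,2,2,4),2), ((1,1,6,5),-2), ((4,1,3,5),2), ((7,1,0,5),-2)],
    [((1,5,10,1),-1), ((4,5,7,1),1), ((7,5,4,1),1), ((10,5,1,1),-1), ((2,4,8,2),1), ((5,4,5,2),-1), ((8,4,2,2),-1), ((1,2,7,4),2), ((4,2,4,4),-2), ((7,2,1,4),2), ((2,1,5,5),-2), ((5,1,2,5),2)],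
    [((2,5,9,1),-1), ((5,5,6,1),1), ((8,5,3,1),1), ((11,5,0,1),-1), ((0,4,10,2),-1), ((3,4,7,2),1), ((6,4,4,2),1), ((9,4,1,2),-1), ((2,2,6,4),2), ((5,2,3,4),-2), ((8,2,0,4),2), ((0,1,7,5),2), ((3,1,4,5),-2), ((6,1,1,5),2)]]"

lemma chk6: "check_all 6 Lsl6"
  by code_simp

definition Lsl7 :: "(expo \<times> int) list list" where
  "Lsl7 = [[((1,5,12,1),4), ((5,5,8,1),-4), ((8,5,5,1),-4), ((12,5,1,1),4), ((6,4,6,2),4), ((1,2,9,4),-7), ((5,2,5,4),7), ((9,2,1,4),-7)],
    [((2,5,11,1),4), ((6,5,7,1),-4), ((9,5,4,1),-4), ((13,5,0,1),4), ((2,2,8,4),-7), ((6,2,4,4),7), ((10,2,0,4),-7)],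
    [((3,5,10,1),4), ((10,5,3,1),-4), ((3,2,7,4),-7), ((7,2,3,4),7)],
    [((0,5,13,1),-4), ((4,5,9,1),4), ((7,5,6,1),4), ((11,5,2,1),-4), ((0,2,10,4),7), ((4,2,6,4),-7), ((8,2,2,4),7)],
    [((6,4,6,2),1)],
    [((0,5,13,1),-4), ((4,5,9,1),4), ((7,5,6,1),4), ((11,5,2,1),-4), ((1,4,11,2),4), ((5,4,7,2),-4), ((8,4,4,2),-4), ((12,4,0,2),4), ((0,2,10,4),7), ((4,2,6,4),-7), ((8,2,2,4),7), ((1,1,8,5),-7), ((5,1,4,5),7), ((9,1,0,5),-7)],
    [((1,5,12,1),-4), ((5,5,8,1),4), ((8,5,5,1),4), ((12,5,1,1),-4), ((2,4,10,2),4), ((6,4,6,2),-4), ((9,4,3,2),-4), ((1,2,9,4),7), ((5,2,5,4),-7), ((9,2,1,4),7), ((2,1,7,5),-7), ((6,1,3,5),7)],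
    [((2,5,11,1),-4), ((6,5,7,1),4), ((9,5,4,1),4), ((13,5,0,1),-4), ((3,4,9,2),4), ((10,4,2,2),-4), ((2,2,8,4),7), ((6,2,4,4),-7), ((10,2,0,4),7), ((3,1,6,5),-7), ((7,1,2,5),7)],
    [((3,5,10,1),-4), ((10,5,3,1),4), ((0,4,12,2),-4), ((4,4,8,2),4), ((7,4,5,2),4), ((11,4,1,2),-4), ((3,2,7,4),7), ((7,2,3,4),-7), ((0,1,9,5),7), ((4,1,5,5),-7), ((8,1,1,5),7)]]"

lemma chk7: "check_all 7 Lsl7"
  by code_simp

definition Lsl8 :: "(expo \<times> int) list list" where
  "Lsl8 = [[((1,5,14,1),5), ((6,5,9,1),-5), ((9,5,6,1),-5), ((14,5,1,1),5), ((7,4,7,2),5), ((1,2,11,4),-8), ((6,2,6,4),8), ((11,2,1,4),-8)],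
    [((2,5,13,1),5), ((7,5,8,1),-5), ((10,5,5,1),-5), ((15,5,0,1),5), ((2,2,10,4),-8), ((7,2,5,4),8), ((12,2,0,4),-8)],
    [((3,5,12,1),5), ((11,5,4,1),-5), ((3,2,9,4),-8), ((8,2,4,4),8)],
    [((4,5,11,1),5), ((12,5,3,1),-5), ((4,2,8,4),-8), ((9,2,3,4),8)],
    [((0,5,15,1),-5), ((5,5,10,1),5), ((8,5,7,1),5), ((13,5,2,1),-5), ((0,2,12,4),8), ((5,2,7,4),-8), ((10,2,2,4),8)],
    [((7,4,7,2),1)],
    [((0,5,15,1),-5), ((5,5,10,1),5), ((8,5,7,1),5), ((13,5,2,1),-5), ((1,4,13,2),5), ((6,4,8,2),-5), ((9,4,5,2),-5), ((14,4,0,2),5), ((0,2,12,4),8), ((5,2,7,4),-8), ((10,2,2,4),8), ((1,1,10,5),-8), ((6,1,5,5),8), ((11,1,0,5),-8)],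
    [((1,5,14,1),-5), ((6,5,9,1),5), ((9,5,6,1),5), ((14,5,1,1),-5), ((2,4,12,2),5), ((7,4,7,2),-5), ((10,4,4,2),-5), ((1,2,11,4),8), ((6,2,6,4),-8), ((11,2,1,4),8), ((2,1,9,5),-8), ((7,1,4,5),8)],
    [((2,5,13,1),-5), ((7,5,8,1),5), ((10,5,5,1),5), ((15,5,0,1),-5), ((3,4,11,2),5), ((11,4,3,2),-5), ((2,2,10,4),8), ((7,2,5,4),-8), ((12,2,0,4),8), ((3,1,8,5),-8), ((8,1,3,5),8)],
    [((3,5,12,1),-5), ((11,5,4,1),5), ((4,4,10,2),5), ((12,4,2,2),-5), ((3,2,9,4),8), ((8,2,4,4),-8), ((4,1,7,5),-8), ((9,1,2,5),8)],
    [((4,5,11,1),-5), ((12,5,3,1),5), ((0,4,14,2),-5), ((5,4,9,2),5), ((8,4,6,2),5), ((13,4,1,2),-5), ((4,2,8,4),8), ((9,2,3,4),-8), ((0,1,11,5),8), ((5,1,6,5),-8), ((10,1,1,5),8)]]"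

lemma chk8: "check_all 8 Lsl8"
  by code_simp

definition Lsl9 :: "(expo \<times> int) list list" where
  "Lsl9 = [[((1,5,16,1),2), ((7,5,10,1),-2), ((10,5,7,1),-2), ((16,5,1,1),2), ((8,4,8,2),2), ((1,2,13,4),-3), ((7,2,7,4),3), ((13,2,1,4),-3)],
    [((2,5,15,1),2), ((8,5,9,1),-2), ((11,5,6,1),-2), ((17,5,0,1),2), ((2,2,12,4),-3), ((8,2,6,4),3), ((14,2,0,4),-3)],
    [((3,5,14,1),2), ((12,5,5,1),-2), ((3,2,11,4),-3), ((9,2,5,4),3)],
    [((4,5,13,1),2), ((13,5,4,1),-2), ((4,2,10,4),-3), ((10,2,4,4),3)],
    [((5,5,12,1),2), ((14,5,3,1),-2), ((5,2,9,4),-3), ((11,2,3,4),3)],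
    [((0,5,17,1),-2), ((6,5,11,1),2), ((9,5,8,1),2), ((15,5,2,1),-2), ((0,2,14,4),3), ((6,2,8,4),-3), ((12,2,2,4),3)],
    [((8,4,8,2),1)],
    [((0,5,17,1),-2), ((6,5,11,1),2), ((9,5,8,1),2), ((15,5,2,1),-2), ((1,4,15,2),2), ((7,4,9,2),-2), ((10,4,6,2),-2), ((16,4,0,2),2), ((0,2,14,4),3), ((6,2,8,4),-3), ((12,2,2,4),3), ((1,1,12,5),-3), ((7,1,6,5),3), ((13,1,0,5),-3)],
    [((1,5,16,1),-2), ((7,5,10,1),2), ((10,5,7,1),2), ((16,5,1,1),-2), ((2,4,14,2),2), ((8,4,8,2),-2), ((11,4,5,2),-2), ((1,2,13,4),3), ((7,2,7,4),-3), ((13,2,1,4),3), ((2,1,11,5),-3), ((8,1,5,5),3)],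
    [((2,5,15,1),-2), ((8,5,9,1),2), ((11,5,6,1),2), ((17,5,0,1),-2), ((3,4,13,2),2), ((12,4,4,2),-2), ((2,2,12,4),3), ((8,2,6,4),-3), ((14,2,0,4),3), ((3,1,10,5),-3), ((9,1,4,5),3)],
    [((3,5,14,1),-2), ((12,5,5,1),2), ((4,4,12,2),2), ((13,4,3,2),-2), ((3,2,11,4),3), ((9,2,5,4),-3), ((4,1,9,5),-3), ((10,1,3,5),3)],
    [((4,5,13,1),-2), ((13,5,4,1),2), ((5,4,11,2),2), ((14,4,2,2),-2), ((4,2,10,4),3), ((10,2,4,4),-3), ((5,1,8,5),-3), ((11,1,2,5),3)],
    [((5,5,12,1),-2), ((14,5,3,1),2), ((0,4,16,2),-2), ((6,4,10,2),2), ((9,4,7,2),2), ((15,4,1,2),-2), ((5,2,9,4),3), ((11,2,3,4),-3), ((0,1,13,5),3), ((6,1,7,5),-3), ((12,1,1,5),3)]]"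

lemma chk9: "check_all 9 Lsl9"
  by code_simp

definition Lsl10 :: "(expo \<times> int) list list" where
  "Lsl10 = [[((1,5,18,1),7), ((8,5,11,1),-7), ((11,5,8,1),-7), ((18,5,1,1),7), ((9,4,9,2),7), ((1,2,15,4),-10), ((8,2,8,4),10), ((15,2,1,4),-10)],
    [((2,5,17,1),7), ((9,5,10,1),-7), ((12,5,7,1),-7), ((19,5,0,1),7), ((2,2,14,4),-10), ((9,2,7,4),10), ((16,2,0,4),-10)],
    [((3,5,16,1),7), ((13,5,6,1),-7), ((3,2,13,4),-10), ((10,2,6,4),10)],
    [((4,5,15,1),7), ((14,5,5,1),-7), ((4,2,12,4),-10), ((11,2,5,4),10)],
    [((5,5,14,1),7), ((15,5,4,1),-7), ((5,2,11,4),-10), ((12,2,4,4),10)],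
    [((6,5,13,1),7), ((16,5,3,1),-7), ((6,2,10,4),-10), ((13,2,3,4),10)],
    [((0,5,19,1),-7), ((7,5,12,1),7), ((10,5,9,1),7), ((17,5,2,1),-7), ((0,2,16,4),10), ((7,2,9,4),-10), ((14,2,2,4),10)],
    [((9,4,9,2),1)],
    [((0,5,19,1),-7), ((7,5,12,1),7), ((10,5,9,1),7), ((17,5,2,1),-7), ((1,4,17,2),7), ((8,4,10,2),-7), ((11,4,7,2),-7), ((18,4,0,2),7), ((0,2,16,4),10), ((7,2,9,4),-10), ((14,2,2,4),10), ((1,1,14,5),-10), ((8,1,7,5),10), ((15,1,0,5),-10)],
    [((1,5,18,1),-7), ((8,5,11,1),7), ((11,5,8,1),7), ((18,5,1,1),-7), ((2,4,16,2),7), ((9,4,9,2),-7), ((12,4,6,2),-7), ((1,2,15,4),10), ((8,2,8,4),-10), ((15,2,1,4),10), ((2,1,13,5),-10), ((9,1,6,5),10)],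
    [((2,5,17,1),-7), ((9,5,10,1),7), ((12,5,7,1),7), ((19,5,0,1),-7), ((3,4,15,2),7), ((13,4,5,2),-7), ((2,2,14,4),10), ((9,2,7,4),-10), ((16,2,0,4),10), ((3,1,12,5),-10), ((10,1,5,5),10)],
    [((3,5,16,1),-7), ((13,5,6,1),7), ((4,4,14,2),7), ((14,4,4,2),-7), ((3,2,13,4),10), ((10,2,6,4),-10), ((4,1,11,5),-10), ((11,1,4,5),10)],
    [((4,5,15,1),-7), ((14,5,5,1),7), ((5,4,13,2),7), ((15,4,3,2),-7), ((4,2,12,4),10), ((11,2,5,4),-10), ((5,1,10,5),-10), ((12,1,3,5),10)],
    [((5,5,14,1),-7), ((15,5,4,1),7), ((6,4,12,2),7), ((16,4,2,2),-7), ((5,2,11,4),10), ((12,2,4,4),-10), ((6,1,9,5),-10), ((13,1,2,5),10)],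
    [((6,5,13,1),-7), ((16,5,3,1),7), ((0,4,18,2),-7), ((7,4,11,2),7), ((10,4,8,2),7), ((17,4,1,2),-7), ((6,2,10,4),10), ((13,2,3,4),-10), ((0,1,15,5),10), ((7,1,8,5),-10), ((14,1,1,5),10)]]"

lemma chk10: "check_all 10 Lsl10"
  by code_simp

theorem mainTheorem1:
  fixes d :: nat
  assumes "5 \<le> d" and "d \<le> 10"
  shows "\<exists>f \<in> S_deg (scale_deg d D1 + scale_deg 3 D2). nondegenerate f \<and>
           (\<exists>\<eta> \<in> S_deg (scale_deg d D1 + scale_deg 3 D2).
              IVHS_rank (scale_deg d D1 + scale_deg 3 D2) f \<eta> = 2 * d - 5)"
proof -
  have "d = 5 \<or> d = 6 \<or> d = 7 \<or> d = 8 \<or> d = 9 \<or> d = 10" using assms by auto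
  thus ?thesis
  proof (elim disjE)
    assume h: "d = 5" show ?thesis unfolding h by (rule check_main[OF _ chk5]) simp
  next
    assume h: "d = 6" show ?thesis unfolding h by (rule check_main[OF _ chk6]) simp
  next
    assume h: "d = 7" show ?thesis unfolding h by (rule check_main[OF _ chk7]) simp
  next
    assume h: "d = 8" show ?thesis unfolding h by (rule check_main[OF _ chk8]) simp
  next
    assume h: "d = 9" show ?thesis unfolding h by (rule check_main[OF _ chk9]) simp
  next
    assume h: "d = 10" show ?thesis unfolding h by (rule check_main[OF _ chk10]) simp
  qed
qed

end
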